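(* Let $\mu\in GF(q)\setminus\{0\}$ with $b:=\mu^2\neq1$, and let $(s,c)$ be either $\left(\frac{1+\mu}2,\left(\frac{1-\mu}2\right)^2\right)$ or $\left(\frac{1-\mu}2,\left(\frac{1+\mu}2\right)^2\right)$. Suppose that for some $P,Q\in\mathcal B_1$ with $P\neq Q$ the circles $\mathcal B^1_{(sP,c)}$ and $\mathcal B^1_{(sQ,c)}$ are tangential. Let $k$ be the multiplicative order of $Q\bar P$ in $GF(q^2)^\times$. Then $3\le k\le q+1$, and for every $R\in\mathcal B_1$ the circles $$\mathcal B^1_{(sR,c)},\ \mathcal B^1_{(sR(Q\bar P),c)},\ \mathcal B^1_{(sR(Q\bar P)^2,c)},\ \dots,\ \mathcal B^1_{(sR(Q\bar P)^{k-1},c)}$$ form a Steiner chain of length $k$ for $\mathcal B_1$ and $\mathcal B_b$. In particular, a Steiner chain of the same length $k$ can be constructed starting with any circle of $\{\mathcal B^1_{(sR,c)}:R\in\mathcal B_1\}$.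
   Context: Let $p$ be an odd prime, $m\ge1$, and $q=p^m$. $GF(q^2)$ denotes the quadratic extension of $GF(q)$, and for $z\in GF(q^2)$ we write $\bar z:=z^{q}$. The Miquelian Möbius plane $\mathbb M(q)$ has point set $GF(q^2)\cup\{\infty\}$; its circles of the first type are $\mathcal B^1_{(s,c)}=\{z\in GF(q^2):(z-s)(\bar z-\bar s)=c\}$ for $s\in GF(q^2)$, $c\in GF(q)\setminus\{0\}$ (circles of the second type are $\{z:\bar s z+s\bar z=c\}\cup\{\infty\}$ for $s\neq0$, $c\in GF(q)$). Two circles are called tangential if they have exactly one point in common. For $a\in GF(q)\setminus\{0\}$ put $\mathcal B_a:=\mathcal B^1_{(0,a)}$, and let $\tau(1,b)$ be the set of circles tangential to both $\mathcal B_1$ and $\mathcal B_b$. A Steiner chain of length $k\ge3$ for $\mathcal B_1$ and $\mathcal B_b$ is a sequence of $k$ pairwise distinct circles $T_1,\dots,T_k\in\tau(1,b)$ such that $T_i$ and $T_{i+1}$ are tangential for $i=1,\dots,k-1$ and $T_k$ and $T_1$ are tangential. *)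

theory Defs
  imports "HOL-Computational_Algebra.Primes"
begin

text \<open>The field GF(q^2) is modelled as a finite field type 'a with CARD('a) = q^2.
  GF(q) is its unique subfield of order q, i.e. the fixed points of z \<mapsto> z^q.
  Points of the Moebius plane are 'a option, with None playing the role of \<infinity>.\<close>

definition cnj :: "nat \<Rightarrow> 'a::field \<Rightarrow> 'a" where
  "cnj q z = z ^ q"

definition subfield :: "nat \<Rightarrow> 'a::field set" where
  "subfield q = {z. z ^ q = z}"

definition circle1 :: "nat \<Rightarrow> 'a::field \<Rightarrow> 'a \<Rightarrow> 'a option set" where
  "circle1 q s c = {Some z | z. (z - s) * (cnj q z - cnj q s) = c}"

definition circle2 :: "nat \<Rightarrow> 'a::field \<Rightarrow> 'a \<Rightarrow> 'a option set" where
  "circle2 q s c = {Some z | z. cnj q s * z + s * cnj q z = c} \<union> {None}"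

definition is_circle :: "nat \<Rightarrow> 'a::field option set \<Rightarrow> bool" where
  "is_circle q C \<longleftrightarrow>
     (\<exists>s c. c \<in> subfield q \<and> c \<noteq> 0 \<and> C = circle1 q s c) \<or>
     (\<exists>s c. s \<noteq> 0 \<and> c \<in> subfield q \<and> C = circle2 q s c)"

definition tangential :: "'a option set \<Rightarrow> 'a option set \<Rightarrow> bool" where
  "tangential A B \<longleftrightarrow> card (A \<inter> B) = 1"

abbreviation Bcirc :: "nat \<Rightarrow> 'a::field \<Rightarrow> 'a option set" where
  "Bcirc q a \<equiv> circle1 q 0 a"

definition tau :: "nat \<Rightarrow> 'a::field \<Rightarrow> 'a option set set" where
  "tau q b = {T. is_circle q T \<and> tangential T (Bcirc q 1) \<and> tangential T (Bcirc q b)}"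

definition steiner_chain :: "nat \<Rightarrow> 'a::field \<Rightarrow> nat \<Rightarrow> (nat \<Rightarrow> 'a option set) \<Rightarrow> bool" where
  "steiner_chain q b k T \<longleftrightarrow> k \<ge> 3 \<and> inj_on T {0..<k} \<and> (\<forall>i<k. T i \<in> tau q b) \<and>
     (\<forall>i. i + 1 < k \<longrightarrow> tangential (T i) (T (i + 1))) \<and> tangential (T (k - 1)) (T 0)"

definition mult_ord :: "'a::field \<Rightarrow> nat" where
  "mult_ord x = (LEAST n. n > 0 \<and> x ^ n = 1)"

end

theory Submission
  imports Defs
begin

lemma mem_circle1: "Some z \<in> circle1 q a c \<longleftrightarrow> (z - a) * (cnj q z - cnj q a) = c"
  by (auto simp: circle1_def)
lemma circle1_eq: "circle1 q a c = Some ` {z. (z - a) * (cnj q z - cnj q a) = c}"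
  by (auto simp: circle1_def)
lemma tang_img: "inj f \<Longrightarrow> tangential (f ` A) (f ` B) = tangential A B"
  unfolding tangential_def by (simp add: image_Int[symmetric] card_image inj_on_subset)
lemma None_circle1: "None \<notin> circle1 q a c"
  by (auto simp: circle1_def)


lemma key_alg:
  fixes z cz R cR s c v X E :: "'a::field"
  assumes h1: "(z - s*R)*(cz - s*cR) = c" and h2: "z*cz = E" and h3: "R*cR = 1"
    and hs: "2*s = 1+v" and hc: "4*c = (1-v)^2" and X: "X = z*cR + cz*R"
  shows "2*(1+v)*X = 4*E + 4*v"
proof -
  have "(z - s*R)*(cz - s*cR) = z*cz - s*X + s*s*(R*cR)" unfolding X by algebra
  hence "E - s*X + s*s = c" using h1 h2 h3 by simp
  hence "4*(E - s*X + s*s) = 4*c" by simp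
  moreover have "4*(E - s*X + s*s) = 4*E - 2*(2*s)*X + (2*s)^2" by algebra
  ultimately have "4*E - 2*(1+v)*X + (1+v)^2 = (1-v)^2" using hs hc by simp
  then show ?thesis by algebra
qed

lemma key_alg2:
  fixes z cz R cR v :: "'a::field"
  assumes h2: "z*cz = v*v" and h3: "R*cR = 1" and X: "z*cR + cz*R = 2*v"
  shows "(z*cR - v)*(cz*R - v) = 0"
proof -
  have "(z*cR - v)*(cz*R - v) = (z*cz)*(R*cR) - v*(z*cR + cz*R) + v*v" by algebra
  thus ?thesis using assms by simp
qed

lemma back_alg:
  fixes w R cR s c v :: "'a::field"
  assumes "R*cR = 1" "4*c = (1-v)^2" "(2*w - 2*s)^2 = (1-v)^2" "(4::'a) \<noteq> 0"
  shows "(w*R - s*R)*(w*cR - s*cR) = c"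
proof -
  have "(w*R - s*R)*(w*cR - s*cR) = (w-s)^2*(R*cR)" by algebra
  moreover have "4*((w-s)^2) = (2*w-2*s)^2" by algebra
  ultimately have "4*((w*R - s*R)*(w*cR - s*cR)) = 4*c" using assms by simp
  thus ?thesis using assms(4) by simp
qed

lemma solve_R:
  fixes z R cR v :: "'a::field"
  assumes "z*cR = v" "R*cR = 1" shows "z = v*R"
proof -
  have "z = z*(R*cR)" using assms by simp
  also have "\<dots> = (z*cR)*R" by (simp add: ac_simps)
  finally show ?thesis using assms by simp
qed

locale stn =
  fixes q :: nat and \<nu> s c :: "'a::{field,finite}"
  assumes cadd: "\<And>x y::'a. (x+y)^q = x^q + y^q"
  and cinv: "\<And>x::'a. (x^q)^q = x"
  and qodd: "odd q"
  and two: "(2::'a) \<noteq> 0"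
  and nu_sub: "\<nu>^q = \<nu>" and nu0: "\<nu> \<noteq> 0" and nu1: "\<nu> \<noteq> 1" and nu2: "\<nu> \<noteq> -1"
  and s_def: "s = (1+\<nu>)/2" and c_def: "c = ((1-\<nu>)/2)^2"
begin

lemma cj_add: "cnj q ((x::'a)+y) = cnj q x + cnj q y" using cadd by (simp add: cnj_def)
lemma cj_mult: "cnj q ((x::'a)*y) = cnj q x * cnj q y" by (simp add: cnj_def power_mult_distrib)
lemma cj_0: "cnj q (0::'a) = 0" using qodd by (simp add: cnj_def zero_power odd_pos)
lemma cj_1: "cnj q (1::'a) = 1" by (simp add: cnj_def)
lemma cj_neg: "cnj q (-(x::'a)) = - cnj q x" using qodd by (simp add: cnj_def)
lemma cj_diff: "cnj q ((x::'a) - y) = cnj q x - cnj q y" unfolding diff_conv_add_uminus cj_add cj_neg by (rule refl)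
lemma cj_cj: "cnj q (cnj q (x::'a)) = x" using cinv by (simp add: cnj_def)
lemma cj_div: "cnj q ((x::'a) / y) = cnj q x / cnj q y" by (simp add: cnj_def power_divide)
lemma cj_2: "cnj q (2::'a) = 2" by (metis cj_1 cj_add one_add_one)
lemma cj_nu: "cnj q \<nu> = \<nu>" using nu_sub by (simp add: cnj_def)
lemma cj_s: "cnj q s = s" by (simp add: s_def cj_div cj_add cj_1 cj_2 cj_nu)
lemma cj_h: "cnj q ((1-\<nu>)/2) = (1-\<nu>)/2" by (simp add: cj_div cj_diff cj_1 cj_2 cj_nu)
lemma cj_c: "cnj q c = c" unfolding c_def power2_eq_square cj_mult cj_h ..
lemma cj_eq0: "cnj q (x::'a) = 0 \<longleftrightarrow> x = 0" by (metis cj_cj cj_0)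
lemma s0: "s \<noteq> 0" using nu2 two by (simp add: s_def add_eq_0_iff)
lemma c0: "c \<noteq> 0" using nu1 two by (simp add: c_def)
lemma hs: "2*s = 1+\<nu>" using two by (simp add: s_def)
lemma four: "(4::'a) \<noteq> 0"
proof -
  have "(4::'a) = 2*2" by simp
  thus ?thesis using two by (metis mult_eq_0_iff)
qed
lemma hc: "4*c = (1-\<nu>)^2" using four by (simp add: c_def power_divide)

lemma nu_ne: "1 + \<nu> \<noteq> 0" using nu2 by (metis add_eq_0_iff)
lemma twonu: "2*(1+\<nu>) \<noteq> 0" using nu_ne two by (metis mult_eq_0_iff)

lemma tanB_gen:
  assumes R: "R * cnj q R = 1" and w: "w = 1 \<or> w = \<nu>"
  shows "circle1 q (s*R) c \<inter> Bcirc q (w*w) = {Some (w*R)}"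
proof (rule set_eqI)
  have cw: "cnj q w = w" using w cj_1 cj_nu by auto
  fix x
  show "x \<in> circle1 q (s*R) c \<inter> Bcirc q (w*w) \<longleftrightarrow> x \<in> {Some (w*R)}"
  proof (cases x)
    case None thus ?thesis by (simp add: None_circle1)
  next
    case (Some z)
    have "Some z \<in> circle1 q (s*R) c \<and> Some z \<in> Bcirc q (w*w) \<longleftrightarrow> z = w*R"
    proof
      assume h: "Some z \<in> circle1 q (s*R) c \<and> Some z \<in> Bcirc q (w*w)"
      hence h1: "(z - s*R)*(cnj q z - s*cnj q R) = c" and h2: "z * cnj q z = w*w"
        by (auto simp: mem_circle1 cj_mult cj_s cj_0)
      have "2*(1+\<nu>)*(z*cnj q R + cnj q z * R) = 4*(w*w) + 4*\<nu>"
        by (rule key_alg[OF h1 h2 R hs hc refl])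
      also have "4*(w*w) + 4*\<nu> = 2*(1+\<nu>)*(2*w)" using w by (auto simp: algebra_simps)
      finally have X: "z*cnj q R + cnj q z*R = 2*w" using twonu by simp
      have "(z*cnj q R - w)*(cnj q z * R - w) = 0"
        by (rule key_alg2[OF h2 R X])
      hence "(z*cnj q R - w)*cnj q (z*cnj q R - w) = 0"
        by (simp add: cj_diff cj_mult cj_cj cw)
      hence "z*cnj q R = w" using cj_eq0 by auto
      thus "z = w*R" using R by (rule solve_R)
    next
      assume z: "z = w*R"
      have "(2*w - 2*s)^2 = (1-\<nu>)^2" using w hs by (auto simp: algebra_simps power2_eq_square)
      hence "(w*R - s*R)*(w*cnj q R - s*cnj q R) = c" using back_alg[OF R hc _ four] by blast
      moreover have "w*R*(w*cnj q R) = w*w" using R by (simp add: ac_simps)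
      ultimately show "Some z \<in> circle1 q (s*R) c \<and> Some z \<in> Bcirc q (w*w)"
        using z R by (simp add: mem_circle1 cj_mult cj_s cj_0 cw)
    qed
    thus ?thesis using Some by auto
  qed
qed

lemma tanB1:
  assumes R: "R * cnj q R = 1"
  shows "circle1 q (s*R) c \<inter> Bcirc q 1 = {Some R}"
  using tanB_gen[OF R, of 1] by simp

lemma tanBb:
  assumes R: "R * cnj q R = 1"
  shows "circle1 q (s*R) c \<inter> Bcirc q (\<nu>^2) = {Some (\<nu>*R)}"
  using tanB_gen[OF R, of \<nu>] by (simp add: power2_eq_square)

lemma rot:
  fixes u a c' :: 'a
  assumes U: "u * cnj q u = 1"
  shows "circle1 q (u*a) c' = map_option ((*) u) ` circle1 q a c'"
proof -
  have inv: "w = u*z \<longleftrightarrow> z = w*cnj q u" for w z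
  proof
    assume "w = u*z" hence "w*cnj q u = z*(u*cnj q u)" by (simp add: ac_simps)
    thus "z = w*cnj q u" using U by simp
  next
    assume "z = w*cnj q u" hence "u*z = w*(u*cnj q u)" by (simp add: ac_simps)
    thus "w = u*z" using U by simp
  qed
  have eq: "(w*cnj q u - a)*(cnj q (w*cnj q u) - cnj q a) = (w - u*a)*(cnj q w - cnj q (u*a))" for w
  proof -
    have "(w*cnj q u - a)*(cnj q (w*cnj q u) - cnj q a) = (w*cnj q u - a)*(cnj q w * u - cnj q a)"
      by (simp add: cj_mult cj_cj)
    also have "\<dots> = (w - u*a)*(cnj q w - cnj q u * cnj q a)"
    proof -
      have A: "cnj q u*(w - u*a) = w*cnj q u - (u*cnj q u)*a" by algebra
      have B: "u*(cnj q w - cnj q u * cnj q a) = cnj q w * u - (u*cnj q u)*cnj q a" by algebra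
      have C: "(cnj q u*(w - u*a))*(u*(cnj q w - cnj q u * cnj q a)) = (u*cnj q u)*((w - u*a)*(cnj q w - cnj q u * cnj q a))" by algebra
      show ?thesis using A B C U by simp
    qed
    finally show ?thesis using U by (simp add: cj_mult)
  qed
  have "{w. (w - u*a) * (cnj q w - cnj q (u*a)) = c'} = (*) u ` {z. (z - a) * (cnj q z - cnj q a) = c'}"
  proof (rule set_eqI)
    fix w
    have "w \<in> (*) u ` {z. (z - a) * (cnj q z - cnj q a) = c'} \<longleftrightarrow> (w*cnj q u - a)*(cnj q (w*cnj q u) - cnj q a) = c'"
      using inv by (auto simp: image_iff)
    thus "w \<in> {w. (w - u*a) * (cnj q w - cnj q (u*a)) = c'} \<longleftrightarrow> w \<in> (*) u ` {z. (z - a) * (cnj q z - cnj q a) = c'}"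
      using eq by simp
  qed
  thus ?thesis unfolding circle1_eq image_image by (simp add: image_image[symmetric])
qed

lemma step:
  assumes P: "P * cnj q P = 1" and Q: "Q * cnj q Q = 1" and R: "R * cnj q R = 1"
    and T: "tangential (circle1 q (s*P) c) (circle1 q (s*Q) c)"
  shows "tangential (circle1 q (s*R) c) (circle1 q (s*(R*(Q*cnj q P))) c)"
proof -
  define u where "u = R * cnj q P"
  have U: "u * cnj q u = 1"
  proof -
    have "u * cnj q u = (R*cnj q R)*(P*cnj q P)" by (simp add: u_def cj_mult cj_cj ac_simps)
    thus ?thesis using P R by simp
  qed
  hence u0: "u \<noteq> 0" by auto
  have "inj ((*) u)" using u0 by (auto simp: inj_def)
  hence inj: "inj (map_option ((*) u))" by (rule option.inj_map)
  have e1: "u*(s*P) = s*R"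
  proof -
    have "u*(s*P) = s*R*(P*cnj q P)" by (simp add: u_def ac_simps)
    thus ?thesis using P by simp
  qed
  have e2: "u*(s*Q) = s*(R*(Q*cnj q P))" by (simp add: u_def ac_simps)
  show ?thesis using T tang_img[OF inj] rot[OF U, of "s*P" c] rot[OF U, of "s*Q" c] e1 e2 by simp
qed

lemma nonzero_s2: "s*s \<noteq> c"
proof
  assume "s*s = c"
  hence "4*(s*s) = 4*c" by simp
  moreover have "4*(s*s) = (2*s)^2" by algebra
  ultimately have "(1+\<nu>)^2 = (1-\<nu>)^2" using hs hc by simp
  moreover have "(1+\<nu>)^2 - (1-\<nu>)^2 = 4*\<nu>" by algebra
  ultimately have "4*\<nu> = 0" by simp
  thus False using four nu0 by simp
qed

lemma not_tang_neg:
  assumes P: "P * cnj q P = 1"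
  shows "\<not> tangential (circle1 q (s*P) c) (circle1 q (s*(-P)) c)"
proof
  let ?S = "circle1 q (s*P) c \<inter> circle1 q (s*(-P)) c"
  assume "tangential (circle1 q (s*P) c) (circle1 q (s*(-P)) c)"
  hence "card ?S = 1" by (simp add: tangential_def)
  then obtain x where Sx: "?S = {x}" by (rule card_1_singletonE)
  hence "x \<in> circle1 q (s*P) c" by blast
  then obtain z where xz: "x = Some z" by (auto simp: circle1_def)
  have h1: "(z - s*P)*(cnj q z - s*cnj q P) = c" and h2: "(z + s*P)*(cnj q z + s*cnj q P) = c"
  proof -
    have m: "Some z \<in> circle1 q (s*P) c" "Some z \<in> circle1 q (s*(-P)) c" using Sx xz by blast+
    from m(1) show "(z - s*P)*(cnj q z - s*cnj q P) = c" unfolding mem_circle1 cj_mult cj_s .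
    from m(2) have "(z - s*(-P))*(cnj q z - s*(- cnj q P)) = c" unfolding mem_circle1 cj_mult cj_s cj_neg .
    moreover have "(z - s*(-P))*(cnj q z - s*(- cnj q P)) = (z + s*P)*(cnj q z + s*cnj q P)" by algebra
    ultimately show "(z + s*P)*(cnj q z + s*cnj q P) = c" by simp
  qed
  have i1: "(-z - s*P)*(- cnj q z - s*cnj q P) = (z + s*P)*(cnj q z + s*cnj q P)" by algebra
  have i2: "(-z - s*(-P))*(- cnj q z - s*(- cnj q P)) = (z - s*P)*(cnj q z - s*cnj q P)" by algebra
  have "Some (-z) \<in> circle1 q (s*P) c" unfolding mem_circle1 cj_mult cj_s cj_neg i1 by (rule h2)
  moreover have "Some (-z) \<in> circle1 q (s*(-P)) c" unfolding mem_circle1 cj_mult cj_s cj_neg i2 by (rule h1)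
  ultimately have "Some (-z) \<in> ?S" by blast
  hence "Some (-z) = x" using Sx by blast
  hence "-z = z" using xz by simp
  hence "z = 0" using two by (metis add_eq_0_iff mult_2 mult_eq_0_iff)
  hence "s*s*(P*cnj q P) = c" using h1 by (simp add: cj_0 ac_simps)
  thus False using P nonzero_s2 by simp
qed

lemma cj_pow: "cnj q ((x::'a)^n) = (cnj q x)^n"
  by (simp add: cnj_def power_mult[symmetric] mult.commute)

lemma norm_pow:
  assumes "R * cnj q R = 1" "w * cnj q w = (1::'a)"
  shows "(R*w^i) * cnj q (R*w^i) = 1"
proof -
  have "(R*w^i) * cnj q (R*w^i) = (R * cnj q R) * (w * cnj q w)^i"
    by (simp add: cj_mult cj_pow power_mult_distrib ac_simps)
  thus ?thesis using assms by simp
qed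

lemma chain:
  assumes P: "P * cnj q P = 1" and Q: "Q * cnj q Q = 1" and PQ: "P \<noteq> Q"
    and T: "tangential (circle1 q (s*P) c) (circle1 q (s*Q) c)"
  shows "3 \<le> mult_ord (Q * cnj q P) \<and> mult_ord (Q * cnj q P) \<le> q + 1 \<and>
    (\<forall>R. Some R \<in> Bcirc q 1 \<longrightarrow>
       steiner_chain q (\<nu> ^ 2) (mult_ord (Q * cnj q P))
         (\<lambda>i. circle1 q (s * R * (Q * cnj q P) ^ i) c))"
proof -
  define \<omega> where "\<omega> = Q * cnj q P"
  define k where "k = mult_ord \<omega>"
  have N\<omega>: "\<omega> * cnj q \<omega> = 1"
  proof -
    have "\<omega> * cnj q \<omega> = (Q * cnj q Q) * (P * cnj q P)" by (simp add: \<omega>_def cj_mult cj_cj ac_simps)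
    thus ?thesis using P Q by simp
  qed
  have QP: "Q = \<omega> * P"
  proof -
    have "\<omega> * P = Q * (P * cnj q P)" by (simp add: \<omega>_def ac_simps)
    thus ?thesis using P by simp
  qed
  have "\<omega>^(q+1) = cnj q \<omega> * \<omega>" unfolding cnj_def by (simp only: power_add power_one_right)
  also have "\<dots> = \<omega> * cnj q \<omega>" by (rule mult.commute)
  also have "\<dots> = 1" by (rule N\<omega>)
  finally have pq: "\<omega>^(q+1) = 1" .
  have ex: "\<exists>n. n > 0 \<and> \<omega>^n = 1" using pq by (intro exI[of _ "q+1"]) simp
  have kprop: "k > 0 \<and> \<omega>^k = 1" unfolding k_def mult_ord_def by (rule LeastI_ex[OF ex])
  have kle: "k \<le> q + 1" unfolding k_def mult_ord_def by (rule Least_le) (use pq in simp)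
  have kmin: "\<omega>^j \<noteq> 1" if "0 < j" "j < k" for j
    using not_less_Least[of j "\<lambda>n. n > 0 \<and> \<omega>^n = 1"] that unfolding k_def mult_ord_def by blast
  have w1: "\<omega> \<noteq> 1" using QP PQ by auto
  have w0: "\<omega> \<noteq> 0" using N\<omega> by auto
  have k1: "k \<noteq> 1" using kprop w1 by auto
  have k2: "k \<noteq> 2"
  proof
    assume "k = 2"
    hence "\<omega>^2 = 1" using kprop by simp
    hence "(\<omega> - 1)*(\<omega> + 1) = 0" by (simp add: algebra_simps power2_eq_square)
    hence "\<omega> = -1" using w1 by (simp add: eq_neg_iff_add_eq_0)
    hence "Q = -P" using QP by simp
    thus False using T not_tang_neg[OF P] by simp
  qed
  have k3: "3 \<le> k" using kprop k1 k2 by linarith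
  have SC: "steiner_chain q (\<nu> ^ 2) k (\<lambda>i. circle1 q (s * R * \<omega> ^ i) c)" if RB: "Some R \<in> Bcirc q 1" for R
  proof -
    have R: "R * cnj q R = 1" using RB by (simp add: mem_circle1 cj_0)
    have R0: "R \<noteq> 0" using R by auto
    have Te: "circle1 q (s * R * \<omega> ^ i) c = circle1 q (s * (R * \<omega> ^ i)) c" for i by (simp add: ac_simps)
    have NR: "(R*\<omega>^i) * cnj q (R*\<omega>^i) = 1" for i by (rule norm_pow[OF R N\<omega>])
    have e1: "s*R*\<omega>^i = s*(R*\<omega>^i)" for i by (simp only: mult.assoc)
    have neq: "circle1 q (s * R * \<omega> ^ i) c \<noteq> circle1 q (s * R * \<omega> ^ j) c" if ij: "i < j" "j < k" for i j
    proof
      assume "circle1 q (s * R * \<omega> ^ i) c = circle1 q (s * R * \<omega> ^ j) c"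
      hence "circle1 q (s * (R * \<omega> ^ i)) c \<inter> Bcirc q 1 = circle1 q (s * (R * \<omega> ^ j)) c \<inter> Bcirc q 1"
        by (simp only: e1)
      hence "{Some (R*\<omega>^i)} = {Some (R*\<omega>^j)}" unfolding tanB1[OF NR[of i]] tanB1[OF NR[of j]] .
      hence "R*\<omega>^i = R*\<omega>^j" by simp
      hence e: "\<omega>^i = \<omega>^j" using R0 by simp
      have "\<omega>^j = \<omega>^i * \<omega>^(j-i)" using ij by (simp add: power_add[symmetric])
      hence "\<omega>^(j-i) = 1" using e w0 by simp
      thus False using kmin[of "j-i"] ij by simp
    qed
    have inj: "inj_on (\<lambda>i. circle1 q (s * R * \<omega> ^ i) c) {0..<k}"
    proof (rule inj_onI, rule ccontr)
      fix i j assume "i \<in> {0..<k}" "j \<in> {0..<k}" and e: "circle1 q (s * R * \<omega> ^ i) c = circle1 q (s * R * \<omega> ^ j) c"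
        and ne: "i \<noteq> j"
      hence ik: "i < k" "j < k" by auto
      from ne have "i < j \<or> j < i" by arith
      thus False
      proof
        assume "i < j" thus False using neq[OF _ ik(2)] e by blast
      next
        assume "j < i" thus False using neq[OF _ ik(1)] e by metis
      qed
    qed
    have csub: "c \<in> subfield q" using cj_c by (simp add: subfield_def cnj_def)
    have tau: "circle1 q (s * R * \<omega> ^ i) c \<in> tau q (\<nu>^2)" for i
    proof -
      have a: "is_circle q (circle1 q (s*(R*\<omega>^i)) c)" unfolding is_circle_def using csub c0 by blast
      have b: "tangential (circle1 q (s*(R*\<omega>^i)) c) (Bcirc q 1)"
        unfolding tangential_def tanB1[OF NR[of i]] by simp
      have d: "tangential (circle1 q (s*(R*\<omega>^i)) c) (Bcirc q (\<nu>^2))"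
        unfolding tangential_def tanBb[OF NR[of i]] by simp
      show ?thesis unfolding tau_def Te using a b d by blast
    qed
    have e2: "R*\<omega>^(i+1) = (R*\<omega>^i)*\<omega>" for i by (simp only: mult.assoc power_add power_one_right)
    have cons: "tangential (circle1 q (s * R * \<omega> ^ i) c) (circle1 q (s * R * \<omega> ^ (i+1)) c)" for i
    proof -
      have "tangential (circle1 q (s*(R*\<omega>^i)) c) (circle1 q (s*((R*\<omega>^i)*\<omega>)) c)"
        by (rule step[OF P Q NR T, folded \<omega>_def])
      thus ?thesis by (simp only: e1 e2)
    qed
    have last: "tangential (circle1 q (s * R * \<omega> ^ (k-1)) c) (circle1 q (s * R * \<omega> ^ 0) c)"
    proof -
      have h: "tangential (circle1 q (s*(R*\<omega>^(k-1))) c) (circle1 q (s*((R*\<omega>^(k-1))*\<omega>)) c)"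
        by (rule step[OF P Q NR T, folded \<omega>_def])
      have RR: "(R*\<omega>^(k-1))*\<omega> = R"
      proof -
        have sk: "Suc (k-1) = k" using kprop by simp
        have "\<omega>^(k-1)*\<omega> = \<omega>^Suc(k-1)" by (simp only: power_Suc2)
        also have "\<dots> = \<omega>^k" by (simp only: sk)
        finally have "\<omega>^(k-1)*\<omega> = \<omega>^k" .
        hence "(R*\<omega>^(k-1))*\<omega> = R*\<omega>^k" by (simp only: mult.assoc)
        thus ?thesis using kprop by simp
      qed
      have e3: "R * \<omega> ^ 0 = (R*\<omega>^(k-1))*\<omega>" unfolding RR by simp
      show ?thesis using h by (simp only: e1 e3)
    qed
    show ?thesis unfolding steiner_chain_def using k3 inj tau cons last by simp
  qed
  show ?thesis using k3 kle SC unfolding k_def \<omega>_def by blast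
qed

end

lemma of_nat_card_0: "of_nat (card (UNIV::'a::{field,finite} set)) = (0::'a)"
proof -
  have "(\<Sum>y\<in>UNIV. y + 1) = (\<Sum>y\<in>(UNIV::'a set). y)"
    by (rule sum.reindex_bij_witness[of _ "\<lambda>y. y - 1" "\<lambda>y. y + 1"]) auto
  hence "(\<Sum>y\<in>UNIV. y) + of_nat (card (UNIV::'a set)) = (\<Sum>y\<in>(UNIV::'a set). y)"
    by (simp add: sum.distrib)
  thus ?thesis by simp
qed

lemma power_card_same:
  fixes x :: "'a :: {field,finite}"
  shows "x ^ card (UNIV :: 'a set) = x"
proof (cases "x = 0")
  case False
  have "x * (\<Prod>y\<in>UNIV-{0}. x * y) = x * x ^ (card (UNIV :: 'a set) - 1) * \<Prod>(UNIV-{0})"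
    by (simp add: prod.distrib mult_ac)
  also have "x * x ^ (card (UNIV :: 'a set) - 1) = x ^ Suc (card (UNIV :: 'a set) - 1)"
    by (subst power_Suc) auto
  also have "Suc (card (UNIV :: 'a set) - 1) = card (UNIV :: 'a set)"
    using finite_UNIV_card_ge_0[where ?'a = 'a] by simp
  also have "(\<Prod>y\<in>UNIV-{0}. x * y) = (\<Prod>y\<in>UNIV-{0}. y)"
    by (rule prod.reindex_bij_witness[of _ "\<lambda>y. y / x" "\<lambda>y. x * y"]) (use False in auto)
  finally show ?thesis
    by simp
qed (use finite_UNIV_card_ge_0[where ?'a = 'a] in auto)

theorem mainTheorem8:
  fixes p m q :: nat and \<mu> s c P Q :: "'a::{field,finite}"
  assumes "prime p" and "odd p" and "m \<ge> 1" and "q = p ^ m"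
    and "card (UNIV :: 'a set) = q ^ 2"
    and "\<mu> \<in> subfield q" and "\<mu> \<noteq> 0" and "\<mu> ^ 2 \<noteq> 1"
    and "(s, c) = ((1 + \<mu>) / 2, ((1 - \<mu>) / 2) ^ 2) \<or> (s, c) = ((1 - \<mu>) / 2, ((1 + \<mu>) / 2) ^ 2)"
    and "Some P \<in> Bcirc q 1" and "Some Q \<in> Bcirc q 1" and "P \<noteq> Q"
    and "tangential (circle1 q (s * P) c) (circle1 q (s * Q) c)"
  shows "3 \<le> mult_ord (Q * cnj q P) \<and> mult_ord (Q * cnj q P) \<le> q + 1 \<and>
    (\<forall>R. Some R \<in> Bcirc q 1 \<longrightarrow>
       steiner_chain q (\<mu> ^ 2) (mult_ord (Q * cnj q P))
         (\<lambda>i. circle1 q (s * R * (Q * cnj q P) ^ i) c))"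
proof -
  note pr = assms(1) and op = assms(2) and qd = assms(4) and cd = assms(5)
  have cardp: "card (UNIV :: 'a set) = p ^ (2*m)" using cd qd by (simp add: power_mult[symmetric] mult.commute)
  have "(of_nat p :: 'a) ^ (2*m) = of_nat (p ^ (2*m))" by (rule of_nat_power[symmetric])
  also have "\<dots> = 0" unfolding cardp[symmetric] by (rule of_nat_card_0)
  finally have "(of_nat p :: 'a) ^ (2*m) = 0" .
  hence "(of_nat p :: 'a) = 0" by simp
  hence "CHAR('a) dvd p" by (simp add: of_nat_eq_0_iff_char_dvd)
  moreover have "CHAR('a) \<noteq> 1" using CHAR_not_1'[where 'a='a] by simp
  moreover have "\<forall>d. d dvd p \<longrightarrow> d = 1 \<or> d = p" using pr by (simp add: prime_nat_iff)
  ultimately have CH: "CHAR('a) = p" by blast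
  have cadd: "(x + y)^q = x^q + y^q" for x y :: 'a
    by (rule freshmans_dream'[where n=m]) (use CH pr qd in auto)
  have cinv: "(x^q)^q = x" for x :: 'a
    using power_card_same[of x] cd by (simp add: power_mult[symmetric] power2_eq_square)
  have qodd: "odd q" using op qd by simp
  have two: "(2::'a) \<noteq> 0"
  proof
    assume "(2::'a) = 0"
    hence "(of_nat 2 :: 'a) = 0" by simp
    hence "p dvd 2" using CH by (simp only: of_nat_eq_0_iff_char_dvd)
    hence "p \<le> 2" by (simp add: dvd_imp_le)
    moreover have "p \<ge> 2" using pr by (simp add: prime_ge_2_nat)
    ultimately have "p = 2" by simp
    thus False using op by simp
  qed
  have mu: "\<mu>^q = \<mu>" using assms(6) by (simp add: subfield_def)
  have m1: "\<mu> \<noteq> 1" "\<mu> \<noteq> -1" using assms(8) by auto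
  have q0: "q > 0" using qodd by (simp add: odd_pos)
  have PN: "P * cnj q P = 1" using assms(10) q0 by (simp add: mem_circle1 cnj_def zero_power)
  have QN: "Q * cnj q Q = 1" using assms(11) q0 by (simp add: mem_circle1 cnj_def zero_power)
  obtain \<nu> where nu: "\<nu> = \<mu> \<or> \<nu> = -\<mu>" and sd: "s = (1+\<nu>)/2" and cdf: "c = ((1-\<nu>)/2)^2"
  proof (cases "(s, c) = ((1 + \<mu>) / 2, ((1 - \<mu>) / 2) ^ 2)")
    case True thus ?thesis using that[of \<mu>] by simp
  next
    case False
    hence "(s, c) = ((1 - \<mu>) / 2, ((1 + \<mu>) / 2) ^ 2)" using assms(9) by blast
    thus ?thesis using that[of "-\<mu>"] by simp
  qed
  have nq: "\<nu>^q = \<nu>" using nu mu qodd by auto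
  have n0: "\<nu> \<noteq> 0" using nu assms(7) by auto
  have n1: "\<nu> \<noteq> 1" "\<nu> \<noteq> -1" using nu m1 by (auto simp: minus_equation_iff)
  have n2: "\<nu>^2 = \<mu>^2" using nu by auto
  interpret stn q \<nu> s c
    by (unfold_locales) (use cadd cinv qodd two nq n0 n1 sd cdf in auto)
  show ?thesis using chain[OF PN QN assms(12) assms(13)] n2 by simp
qed

end
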